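(* Let $d$ be an odd integer, $d\ge 3$, and let $G=\langle\sigma,\tau\rangle$ be the dihedral group with $\tau$ of order $d$, $\sigma$ of order $2$ and $\sigma\tau=\tau^{-1}\sigma$. In $\mathbb{Z}[G]$ put $T_\sigma=1+\sigma$, $T_\tau=\sum_{i=0}^{d-1}\tau^i$, $\mathcal{B}=1-\sigma\tau$, and consider the left ideals (left $\mathbb{Z}[G]$-modules) $M_1=\mathbb{Z}[G]T_\sigma T_\tau$, $M_2=\mathbb{Z}[G]T_\sigma$, $M_3=\mathbb{Z}[G]\mathcal{B}$, $M_4=\mathbb{Z}[G]\mathcal{B}T_\tau$, with maps $d_1:M_1\to M_2$ the inclusion, $d_2:M_2\to M_3$, $x\mapsto x(1-\tau)$, $d_3:M_3\to M_4$, $x\mapsto xT_\tau$, and homotopies $h_1:M_2\to M_1$, $x\mapsto xT_\tau$, $h_2:M_3\to M_2$ given by $h_2(x\mathcal{B})=x\sum_{i=0}^{d-1}\big(\tfrac{d-1}{2}-i\big)\tau^iT_\sigma$ for $x\in\mathbb{Z}[G]$, and $h_3:M_4\to M_3$ the inclusion. Then $0\to M_1\xrightarrow{d_1}M_2\xrightarrow{d_2}M_3\xrightarrow{d_3}M_4\to0$ is exact, all of $d_1,d_2,d_3,h_1,h_2,h_3$ are well-defined $\mathbb{Z}[G]$-module homomorphisms, and the prism conditions hold: $h_1d_1=d\cdot\mathrm{id}_{M_1}$, $d_1h_1+h_2d_2=d\cdot\mathrm{id}_{M_2}$, $d_2h_2+h_3d_3=d\cdot\mathrm{id}_{M_3}$,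 $d_3h_3=d\cdot\mathrm{id}_{M_4}$. *)

theory Defs
  imports Main
begin

text \<open>The dihedral group of order 2d: the pair (s,k) stands for sigma^s tau^k
  (s = True meaning sigma^1), with k in {0..<d}.  Relation: tau^k sigma = sigma tau^(-k).\<close>

definition dih_carrier :: "nat \<Rightarrow> (bool \<times> nat) set" where
  "dih_carrier d = UNIV \<times> {..<d}"

fun dih_mult :: "nat \<Rightarrow> bool \<times> nat \<Rightarrow> bool \<times> nat \<Rightarrow> bool \<times> nat" where
  "dih_mult d (s, k) (t, l) = ((s \<noteq> t), ((if t then d - k else k) + l) mod d)"

text \<open>The integral group ring Z[G]: integer-valued functions supported on the group.\<close>

type_synonym zg = "bool \<times> nat \<Rightarrow> int"

definition zg :: "nat \<Rightarrow> zg set" where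
  "zg d = {x. \<forall>g. g \<notin> dih_carrier d \<longrightarrow> x g = 0}"

definition zg_zero :: zg where "zg_zero = (\<lambda>_. 0)"
definition zg_add :: "zg \<Rightarrow> zg \<Rightarrow> zg" where "zg_add x y = (\<lambda>g. x g + y g)"
definition zg_sub :: "zg \<Rightarrow> zg \<Rightarrow> zg" where "zg_sub x y = (\<lambda>g. x g - y g)"
definition zg_smult :: "int \<Rightarrow> zg \<Rightarrow> zg" where "zg_smult c x = (\<lambda>g. c * x g)"
definition zg_sum :: "('i \<Rightarrow> zg) \<Rightarrow> 'i set \<Rightarrow> zg" where
  "zg_sum f I = (\<lambda>g. \<Sum>i\<in>I. f i g)"

definition zg_mult :: "nat \<Rightarrow> zg \<Rightarrow> zg \<Rightarrow> zg" where
  "zg_mult d x y = (\<lambda>g. \<Sum>h\<in>dih_carrier d. \<Sum>k\<in>dih_carrier d.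
       if dih_mult d h k = g then x h * y k else 0)"

definition zg_of :: "bool \<times> nat \<Rightarrow> zg" where
  "zg_of g = (\<lambda>h. if h = g then 1 else 0)"

definition zg_one :: zg where "zg_one = zg_of (False, 0)"
definition sig :: zg where "sig = zg_of (True, 0)"
definition tau_pow :: "nat \<Rightarrow> nat \<Rightarrow> zg" where "tau_pow d i = zg_of (False, i mod d)"

definition T_sig :: zg where "T_sig = zg_add zg_one sig"
definition T_tau :: "nat \<Rightarrow> zg" where "T_tau d = zg_sum (tau_pow d) {..<d}"
definition BB :: "nat \<Rightarrow> zg" where "BB d = zg_sub zg_one (zg_mult d sig (tau_pow d 1))"

definition left_ideal :: "nat \<Rightarrow> zg \<Rightarrow> zg set" where
  "left_ideal d a = {zg_mult d x a | x. x \<in> zg d}"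

definition M1 :: "nat \<Rightarrow> zg set" where "M1 d = left_ideal d (zg_mult d T_sig (T_tau d))"
definition M2 :: "nat \<Rightarrow> zg set" where "M2 d = left_ideal d T_sig"
definition M3 :: "nat \<Rightarrow> zg set" where "M3 d = left_ideal d (BB d)"
definition M4 :: "nat \<Rightarrow> zg set" where "M4 d = left_ideal d (zg_mult d (BB d) (T_tau d))"

definition d1 :: "nat \<Rightarrow> zg \<Rightarrow> zg" where "d1 d x = x"
definition d2 :: "nat \<Rightarrow> zg \<Rightarrow> zg" where "d2 d x = zg_mult d x (zg_sub zg_one (tau_pow d 1))"
definition d3 :: "nat \<Rightarrow> zg \<Rightarrow> zg" where "d3 d x = zg_mult d x (T_tau d)"
definition h1 :: "nat \<Rightarrow> zg \<Rightarrow> zg" where "h1 d x = zg_mult d x (T_tau d)"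

definition h2_elem :: "nat \<Rightarrow> zg" where
  "h2_elem d = zg_sum (\<lambda>i. zg_smult (int ((d - 1) div 2) - int i)
                         (zg_mult d (tau_pow d i) T_sig)) {..<d}"

text \<open>h2(x B) = x * h2_elem, for some representative x (well-definedness is part of the theorem).\<close>
definition h2 :: "nat \<Rightarrow> zg \<Rightarrow> zg" where
  "h2 d y = zg_mult d (SOME x. x \<in> zg d \<and> zg_mult d x (BB d) = y) (h2_elem d)"
definition h3 :: "nat \<Rightarrow> zg \<Rightarrow> zg" where "h3 d x = x"

definition zg_hom :: "nat \<Rightarrow> zg set \<Rightarrow> zg set \<Rightarrow> (zg \<Rightarrow> zg) \<Rightarrow> bool" where
  "zg_hom d M N f \<longleftrightarrow> (\<forall>x\<in>M. f x \<in> N)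
     \<and> (\<forall>x\<in>M. \<forall>y\<in>M. f (zg_add x y) = zg_add (f x) (f y))
     \<and> (\<forall>r\<in>zg d. \<forall>x\<in>M. f (zg_mult d r x) = zg_mult d r (f x))"

end

theory Submission
  imports Defs
begin



lemma modA: "k < d \<Longrightarrow> int ((d - k + l) mod d) = (int l - int k) mod int d"
proof -
  assume k: "k < d"
  have "int ((d - k + l) mod d) = (int l - int k + int d) mod int d"
    using k by (simp add: of_nat_mod of_nat_diff algebra_simps)
  also have "\<dots> = (int l - int k) mod int d"
    by simp
  finally show ?thesis .
qed

lemma modB: "int ((k + l) mod d) = (int k + int l) mod int d"
  by (simp add: of_nat_mod)

lemma modR: "(int d + a - b) mod int d = (a - b) mod int d"
  by (metis add.commute add_diff_eq mod_add_self2)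

lemma dm_assoc:
  assumes "0 < d" "snd a < d" "snd b < d" "snd c < d"
  shows "dih_mult d (dih_mult d a b) c = dih_mult d a (dih_mult d b c)"
proof -
  obtain s k t l u m where abc: "a = (s,k)" "b = (t,l)" "c = (u,m)"
    by (metis prod.exhaust)
  have k: "k < d" and l: "l < d" using assms abc by auto
  have d: "0 < d" by fact
  have lt: "\<And>x. x mod d < d" using d by simp
  show ?thesis unfolding abc dih_mult.simps prod.inject
  proof (intro conjI)
    show "((s \<noteq> t) \<noteq> u) = (s \<noteq> (t \<noteq> u))" by auto
    show "((if u then d - ((if t then d - k else k) + l) mod d else ((if t then d - k else k) + l) mod d) + m) mod d =
      ((if t \<noteq> u then d - k else k) + ((if u then d - l else l) + m) mod d) mod d"
      apply (rule int_int_eq[THEN iffD1])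
      apply (cases t; cases u; simp only: if_True if_False simp_thms)
      apply (simp_all only: modA[OF lt] modA[OF k] modA[OF l])
      apply (simp_all only: modB of_nat_add)
      apply (simp_all only: of_nat_diff[OF less_imp_le[OF k]] of_nat_diff[OF less_imp_le[OF l]])
      apply (simp_all add: mod_simps)
      apply (simp_all add: algebra_simps)
      apply (simp_all add: modR)
      done
  qed
qed

definition dinv :: "nat \<Rightarrow> bool \<times> nat \<Rightarrow> bool \<times> nat" where
  "dinv d g = (fst g, if fst g then snd g else (d - snd g) mod d)"

lemma carrier_iff: "g \<in> dih_carrier d \<longleftrightarrow> snd g < d"
  by (cases g) (auto simp: dih_carrier_def)

lemma dm_in: "0 < d \<Longrightarrow> dih_mult d g h \<in> dih_carrier d"
  by (cases g; cases h) (simp add: carrier_iff)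

lemma dinv_in: "0 < d \<Longrightarrow> g \<in> dih_carrier d \<Longrightarrow> dinv d g \<in> dih_carrier d"
  by (cases g) (simp add: carrier_iff dinv_def)

lemma dm_one_left: "g \<in> dih_carrier d \<Longrightarrow> dih_mult d (False,0) g = g"
  by (cases g) (simp add: carrier_iff)

lemma dm_one_right: "g \<in> dih_carrier d \<Longrightarrow> dih_mult d g (False,0) = g"
  by (cases g) (simp add: carrier_iff)

lemma dm_inv_left: "g \<in> dih_carrier d \<Longrightarrow> dih_mult d (dinv d g) g = (False,0)"
proof (cases g)
  case (Pair s k)
  assume "g \<in> dih_carrier d"
  then have k: "k < d" using Pair by (simp add: carrier_iff)
  show ?thesis using k Pair
    by (cases s) (simp_all add: dinv_def mod_add_left_eq)
qed

lemma dm_inv_right: "g \<in> dih_carrier d \<Longrightarrow> dih_mult d g (dinv d g) = (False,0)"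
proof (cases g)
  case (Pair s k)
  assume "g \<in> dih_carrier d"
  then have k: "k < d" using Pair by (simp add: carrier_iff)
  show ?thesis using k Pair
    by (cases s) (simp_all add: dinv_def mod_add_right_eq)
qed

lemma dm_assoc': "0 < d \<Longrightarrow> a \<in> dih_carrier d \<Longrightarrow> b \<in> dih_carrier d \<Longrightarrow> c \<in> dih_carrier d \<Longrightarrow>
  dih_mult d (dih_mult d a b) c = dih_mult d a (dih_mult d b c)"
  using dm_assoc by (simp add: carrier_iff)

lemma solve_right:
  assumes d: "0 < d" and h: "h \<in> dih_carrier d" and k: "k \<in> dih_carrier d" and g: "g \<in> dih_carrier d"
  shows "dih_mult d h k = g \<longleftrightarrow> k = dih_mult d (dinv d h) g"
proof
  assume "dih_mult d h k = g"
  then show "k = dih_mult d (dinv d h) g"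
    using dm_assoc'[OF d dinv_in[OF d h] h k] dm_inv_left[OF h] dm_one_left[OF k] by simp
next
  assume "k = dih_mult d (dinv d h) g"
  then show "dih_mult d h k = g"
    using dm_assoc'[OF d h dinv_in[OF d h] g] dm_inv_right[OF h] dm_one_left[OF g] by simp
qed

lemma solve_left:
  assumes d: "0 < d" and h: "h \<in> dih_carrier d" and k: "k \<in> dih_carrier d" and g: "g \<in> dih_carrier d"
  shows "dih_mult d h k = g \<longleftrightarrow> h = dih_mult d g (dinv d k)"
proof
  assume "dih_mult d h k = g"
  then show "h = dih_mult d g (dinv d k)"
    using dm_assoc'[OF d h k dinv_in[OF d k]] dm_inv_right[OF k] dm_one_right[OF h] by simp
next
  assume "h = dih_mult d g (dinv d k)"
  then show "dih_mult d h k = g"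
    using dm_assoc'[OF d g dinv_in[OF d k] k] dm_inv_left[OF k] dm_one_right[OF g] by simp
qed

lemma fin_C: "finite (dih_carrier d)"
  by (simp add: dih_carrier_def)

lemma mult_R:
  assumes d: "0 < d" and g: "g \<in> dih_carrier d"
  shows "zg_mult d x y g = (\<Sum>h\<in>dih_carrier d. x h * y (dih_mult d (dinv d h) g))"
  unfolding zg_mult_def
proof (rule sum.cong[OF refl])
  fix h assume h: "h \<in> dih_carrier d"
  have "(\<Sum>k\<in>dih_carrier d. if dih_mult d h k = g then x h * y k else 0)
      = (\<Sum>k\<in>dih_carrier d. if k = dih_mult d (dinv d h) g then x h * y k else 0)"
    by (rule sum.cong[OF refl]) (simp add: solve_right[OF d h _ g])
  also have "\<dots> = x h * y (dih_mult d (dinv d h) g)"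
    using dm_in[OF d] by (simp add: sum.delta[OF fin_C])
  finally show "(\<Sum>k\<in>dih_carrier d. if dih_mult d h k = g then x h * y k else 0) = x h * y (dih_mult d (dinv d h) g)" .
qed

lemma mult_L:
  assumes d: "0 < d" and g: "g \<in> dih_carrier d"
  shows "zg_mult d x y g = (\<Sum>k\<in>dih_carrier d. x (dih_mult d g (dinv d k)) * y k)"
  unfolding zg_mult_def
  apply (subst sum.swap)
proof (rule sum.cong[OF refl])
  fix k assume k: "k \<in> dih_carrier d"
  have "(\<Sum>h\<in>dih_carrier d. if dih_mult d h k = g then x h * y k else 0)
      = (\<Sum>h\<in>dih_carrier d. if h = dih_mult d g (dinv d k) then x h * y k else 0)"
    by (rule sum.cong[OF refl]) (simp add: solve_left[OF d _ k g])
  also have "\<dots> = x (dih_mult d g (dinv d k)) * y k"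
    using dm_in[OF d] by (simp add: sum.delta[OF fin_C])
  finally show "(\<Sum>h\<in>dih_carrier d. if dih_mult d h k = g then x h * y k else 0) = x (dih_mult d g (dinv d k)) * y k" .
qed

lemma mult_out: "0 < d \<Longrightarrow> g \<notin> dih_carrier d \<Longrightarrow> zg_mult d x y g = 0"
proof -
  assume d: "0 < d" and g: "g \<notin> dih_carrier d"
  have "\<And>h k. dih_mult d h k \<noteq> g" using dm_in[OF d] g by metis
  then show ?thesis unfolding zg_mult_def by simp
qed

lemma mult_zg: "0 < d \<Longrightarrow> zg_mult d x y \<in> zg d"
  by (simp add: zg_def mult_out)

lemma delta1: "(if P then 1 else 0) * (a::int) = (if P then a else 0)"
  "a * (if P then 1 else 0) = (if P then a else 0)"
  by auto

lemma mult_E_right: "0 < d \<Longrightarrow> g \<in> dih_carrier d \<Longrightarrow> h \<in> dih_carrier d \<Longrightarrow>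
   zg_mult d x (zg_of g) h = x (dih_mult d h (dinv d g))"
  by (simp add: mult_L zg_of_def delta1 sum.delta[OF fin_C] cong: if_cong)

lemma mult_E_left: "0 < d \<Longrightarrow> g \<in> dih_carrier d \<Longrightarrow> h \<in> dih_carrier d \<Longrightarrow>
   zg_mult d (zg_of g) y h = y (dih_mult d (dinv d g) h)"
  by (simp add: mult_R zg_of_def delta1 sum.delta[OF fin_C] cong: if_cong)

lemma mult_assoc:
  assumes d: "0 < d"
  shows "zg_mult d (zg_mult d x y) z = zg_mult d x (zg_mult d y z)"
proof
  fix g
  show "zg_mult d (zg_mult d x y) z g = zg_mult d x (zg_mult d y z) g"
  proof (cases "g \<in> dih_carrier d")
    case False then show ?thesis by (simp add: mult_out d)
  next
    case g: True
    have "zg_mult d (zg_mult d x y) z g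
       = (\<Sum>k\<in>dih_carrier d. (\<Sum>h\<in>dih_carrier d. x h * y (dih_mult d (dinv d h) (dih_mult d g (dinv d k)))) * z k)"
      by (simp add: mult_L[OF d g] mult_R[OF d] dm_in[OF d])
    also have "\<dots> = (\<Sum>h\<in>dih_carrier d. x h * (\<Sum>k\<in>dih_carrier d. y (dih_mult d (dih_mult d (dinv d h) g) (dinv d k)) * z k))"
      apply (simp add: sum_distrib_left sum_distrib_right)
      apply (subst sum.swap)
      apply (rule sum.cong[OF refl])+
      apply (simp add: dm_assoc'[OF d] dinv_in[OF d] g)
      done
    also have "\<dots> = zg_mult d x (zg_mult d y z) g"
      by (simp add: mult_R[OF d g] mult_L[OF d] dm_in[OF d])
    finally show ?thesis .
  qed
qed




lemma if_add0: "(if P then a + b else 0) = (if P then a else 0) + (if P then b else (0::int))"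
  by auto
lemma if_sub0: "(if P then a - b else 0) = (if P then a else 0) - (if P then b else (0::int))"
  by auto

lemma add_L: "zg_mult d (zg_add x y) z = zg_add (zg_mult d x z) (zg_mult d y z)"
  unfolding zg_mult_def zg_add_def
  by (rule ext, simp only: sum.distrib[symmetric], intro sum.cong refl, simp add: distrib_right)
lemma add_R: "zg_mult d z (zg_add x y) = zg_add (zg_mult d z x) (zg_mult d z y)"
  unfolding zg_mult_def zg_add_def
  by (rule ext, simp only: sum.distrib[symmetric], intro sum.cong refl, simp add: distrib_left)
lemma sub_L: "zg_mult d (zg_sub x y) z = zg_sub (zg_mult d x z) (zg_mult d y z)"
  unfolding zg_mult_def zg_sub_def
  by (rule ext, simp only: sum_subtractf[symmetric], intro sum.cong refl, simp add: left_diff_distrib)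
lemma sub_R: "zg_mult d z (zg_sub x y) = zg_sub (zg_mult d z x) (zg_mult d z y)"
  unfolding zg_mult_def zg_sub_def
  by (rule ext, simp only: sum_subtractf[symmetric], intro sum.cong refl, simp add: right_diff_distrib)
lemma smult_L: "zg_mult d (zg_smult c x) y = zg_smult c (zg_mult d x y)"
  by (simp add: zg_mult_def zg_smult_def fun_eq_iff sum_distrib_left if_distrib mult.assoc cong: if_cong)
lemma smult_R: "zg_mult d x (zg_smult c y) = zg_smult c (zg_mult d x y)"
  by (simp add: zg_mult_def zg_smult_def fun_eq_iff sum_distrib_left if_distrib mult.left_commute cong: if_cong)
lemma zero_R: "zg_mult d x zg_zero = zg_zero"
  by (simp add: zg_mult_def zg_zero_def fun_eq_iff cong: if_cong)

lemma sum_L: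
  assumes d: "0 < d" and I: "finite I"
  shows "zg_mult d (zg_sum f I) y = zg_sum (\<lambda>i. zg_mult d (f i) y) I"
proof
  fix g show "zg_mult d (zg_sum f I) y g = zg_sum (\<lambda>i. zg_mult d (f i) y) I g"
    by (cases "g \<in> dih_carrier d")
       (simp_all add: mult_R[OF d] mult_out[OF d] zg_sum_def sum_distrib_right sum.swap[of _ I])
qed

lemma zg_add_in: "x \<in> zg d \<Longrightarrow> y \<in> zg d \<Longrightarrow> zg_add x y \<in> zg d"
  by (simp add: zg_def zg_add_def)
lemma zg_sub_in: "x \<in> zg d \<Longrightarrow> y \<in> zg d \<Longrightarrow> zg_sub x y \<in> zg d"
  by (simp add: zg_def zg_sub_def)
lemma zg_smult_in: "x \<in> zg d \<Longrightarrow> zg_smult c x \<in> zg d"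
  by (simp add: zg_def zg_smult_def)
lemma zg_sum_in: "(\<And>i. i \<in> I \<Longrightarrow> f i \<in> zg d) \<Longrightarrow> zg_sum f I \<in> zg d"
  by (simp add: zg_def zg_sum_def)
lemma zg_of_in: "g \<in> dih_carrier d \<Longrightarrow> zg_of g \<in> zg d"
  by (auto simp add: zg_def zg_of_def)
lemma zg_out: "x \<in> zg d \<Longrightarrow> g \<notin> dih_carrier d \<Longrightarrow> x g = 0"
  unfolding zg_def by blast

lemma one_L:
  assumes d: "0 < d" and x: "x \<in> zg d"
  shows "zg_mult d zg_one x = x"
proof
  fix g show "zg_mult d zg_one x g = x g"
    by (cases "g \<in> dih_carrier d")
       (simp_all add: zg_one_def mult_E_left[OF d] mult_out[OF d] zg_out[OF x] carrier_iff dinv_def d dm_one_left)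
qed

lemma one_R:
  assumes d: "0 < d" and x: "x \<in> zg d"
  shows "zg_mult d x zg_one = x"
proof
  fix g show "zg_mult d x zg_one g = x g"
    by (cases "g \<in> dih_carrier d")
       (simp_all add: zg_one_def mult_E_right[OF d] mult_out[OF d] zg_out[OF x] carrier_iff dinv_def d dm_one_right)
qed

lemma EE:
  assumes d: "0 < d" and a: "a \<in> dih_carrier d" and b: "b \<in> dih_carrier d"
  shows "zg_mult d (zg_of a) (zg_of b) = zg_of (dih_mult d a b)"
proof
  fix g show "zg_mult d (zg_of a) (zg_of b) g = zg_of (dih_mult d a b) g"
  proof (cases "g \<in> dih_carrier d")
    case True
    have "zg_mult d (zg_of a) (zg_of b) g = zg_of b (dih_mult d (dinv d a) g)"
      by (rule mult_E_left[OF d a True])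
    then show ?thesis using solve_right[OF d a b True]
      by (auto simp: zg_of_def)
  next
    case False
    then show ?thesis using dm_in[OF d, of a b]
      by (auto simp: mult_out[OF d] zg_of_def)
  qed
qed

lemma ext_C:
  assumes "x \<in> zg d" "y \<in> zg d" "\<And>s k. k < d \<Longrightarrow> x (s,k) = y (s,k)"
  shows "x = y"
proof
  fix g show "x g = y g"
  proof (cases g)
    case (Pair s k)
    then show ?thesis using assms
      by (cases "k < d") (auto simp: zg_def dih_carrier_def)
  qed
qed




definition cc :: "nat \<Rightarrow> nat \<Rightarrow> int" where "cc d i = int ((d - 1) div 2) - int i"

lemma sum_C: "(\<Sum>h\<in>dih_carrier d. f h) = (\<Sum>j<d. f (False, j)) + (\<Sum>j<d. f (True, j))"
proof -
  have "(\<Sum>h\<in>dih_carrier d. f h) = (\<Sum>s\<in>UNIV. \<Sum>j<d. f (s, j))"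
    unfolding dih_carrier_def by (simp add: sum.cartesian_product)
  also have "\<dots> = (\<Sum>j<d. f (False, j)) + (\<Sum>j<d. f (True, j))"
    by (simp add: UNIV_bool)
  finally show ?thesis .
qed

lemma T_tau_val: "T_tau d = (\<lambda>(s,k). if \<not> s \<and> k < d then 1 else 0)"
proof
  fix g show "T_tau d g = (\<lambda>(s,k). if \<not> s \<and> k < d then 1 else 0) g"
  proof (cases g)
    case (Pair s k)
    have "T_tau d (s,k) = (\<Sum>i<d. if i = k then (if \<not> s then 1 else 0) else 0)"
      unfolding T_tau_def zg_sum_def tau_pow_def zg_of_def
      by (rule sum.cong) auto
    also have "\<dots> = (if \<not> s \<and> k < d then 1 else 0)"
      by (simp add: sum.delta)
    finally show ?thesis using Pair by simp
  qed
qed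

lemma T_sig_val: "0 < d \<Longrightarrow> T_sig = (\<lambda>(s,k). if k = 0 then 1 else 0)"
  by (auto simp: T_sig_def zg_add_def zg_one_def sig_def zg_of_def fun_eq_iff)

lemma sig_t1: "2 < d \<Longrightarrow> zg_mult d sig (tau_pow d 1) = zg_of (True, 1)"
  unfolding sig_def tau_pow_def
  by (subst EE) (auto simp: carrier_iff)

lemma BB_val: "2 < d \<Longrightarrow> BB d = (\<lambda>g. if g = (False,0) then 1 else if g = (True,1) then -1 else 0)"
  unfolding BB_def by (subst sig_t1) (auto simp: zg_sub_def zg_one_def zg_of_def fun_eq_iff)

lemma D1_val: "2 < d \<Longrightarrow> zg_sub zg_one (tau_pow d 1) = (\<lambda>g. if g = (False,0) then 1 else if g = (False,1) then -1 else 0)"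
  by (auto simp: tau_pow_def zg_sub_def zg_one_def zg_of_def fun_eq_iff)

lemma tpT: "0 < d \<Longrightarrow> i < d \<Longrightarrow> zg_mult d (tau_pow d i) T_sig = zg_add (zg_of (False, i)) (zg_of (True, (d - i) mod d))"
  unfolding T_sig_def tau_pow_def zg_one_def sig_def
  by (simp add: add_R EE carrier_iff)

lemma h2e_val: assumes d: "0 < d"
  shows "h2_elem d = (\<lambda>(s,k). if k < d then (if s then cc d ((d - k) mod d) else cc d k) else 0)"
proof
  fix g show "h2_elem d g = (\<lambda>(s,k). if k < d then (if s then cc d ((d - k) mod d) else cc d k) else 0) g"
  proof (cases g)
    case (Pair s k)
    have "h2_elem d (s,k) = (\<Sum>i<d. cc d i * ((if (s,k) = (False,i) then 1 else 0) + (if (s,k) = (True, (d-i) mod d) then 1 else 0)))"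
      unfolding h2_elem_def zg_sum_def zg_smult_def
      by (rule sum.cong) (auto simp: tpT d cc_def zg_add_def zg_of_def)
    also have "\<dots> = (\<Sum>i<d. if i = k \<and> \<not> s then cc d i else 0) + (\<Sum>i<d. if s \<and> k = (d - i) mod d then cc d i else 0)"
      by (subst sum.distrib[symmetric], rule sum.cong) auto
    also have "\<dots> = (if k < d then (if s then cc d ((d - k) mod d) else cc d k) else 0)"
    proof (cases s)
      case False then show ?thesis by (simp add: sum.delta)
    next
      case True
      have "(\<Sum>i<d. if k = (d - i) mod d then cc d i else 0) = (\<Sum>i<d. if i = (d - k) mod d \<and> k < d then cc d i else 0)"
      proof (rule sum.cong[OF refl])
        fix i assume i: "i \<in> {..<d}"
        have "k = (d - i) mod d \<longleftrightarrow> (i = (d - k) mod d \<and> k < d)"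
        proof
          assume "k = (d - i) mod d" then show "i = (d - k) mod d \<and> k < d" using i d
            by (cases "i = 0") (auto simp: mod_if)
        next
          assume "i = (d - k) mod d \<and> k < d" then show "k = (d - i) mod d" using i d
            by (cases "k = 0") (auto simp: mod_if)
        qed
        then show "(if k = (d - i) mod d then cc d i else 0) = (if i = (d - k) mod d \<and> k < d then cc d i else 0)"
          by simp
      qed
      also have "\<dots> = (if k < d then cc d ((d - k) mod d) else 0)"
        using d by (cases "k < d") (simp_all add: sum.delta)
      finally show ?thesis using True by simp
    qed
    finally show ?thesis using Pair by simp
  qed
qed


lemma sigL: assumes d: "0 < d" and k: "k < d" and X: "X \<in> zg d"
  shows "zg_mult d T_sig X (s,k) = X (s,k) + X (\<not> s, k)"
  unfolding T_sig_def add_L one_L[OF d X]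
  using k by (simp add: zg_add_def sig_def mult_E_left[OF d] carrier_iff d dinv_def)

lemma E1L: assumes d: "1 < d" and k: "k < d"
  shows "zg_mult d (zg_of (True,1)) X (s,k) = X (\<not> s, ((if s then d - 1 else 1) + k) mod d)"
proof -
  have "(True,1) \<in> dih_carrier d" "(s,k) \<in> dih_carrier d" using d k by (auto simp: carrier_iff)
  from mult_E_left[OF _ this, of X] d
  show ?thesis by (simp add: dinv_def)
qed

lemma sigR: assumes d: "0 < d" and k: "k < d"
  shows "zg_mult d X sig (s,k) = X (\<not> s, (d - k) mod d)"
  using k d by (simp add: sig_def mult_E_right carrier_iff dinv_def)

lemma E1R: assumes d: "1 < d" and k: "k < d"
  shows "zg_mult d X (zg_of (True,1)) (s,k) = X (\<not> s, (d - k + 1) mod d)"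
  using k d by (simp add: mult_E_right carrier_iff dinv_def)

lemma t1R: assumes d: "1 < d" and k: "k < d"
  shows "zg_mult d X (tau_pow d 1) (s,k) = X (s, (k + (d - 1)) mod d)"
  using k d by (simp add: tau_pow_def mult_E_right carrier_iff dinv_def)

lemma tauR: assumes d: "0 < d" and k: "k < d"
  shows "zg_mult d X (T_tau d) (s,k) = (\<Sum>j<d. X (s,j))"
proof -
  have "zg_mult d X (T_tau d) (s,k) = (\<Sum>h\<in>dih_carrier d. X h * T_tau d (dih_mult d (dinv d h) (s,k)))"
    using k by (simp add: mult_R[OF d] carrier_iff)
  also have "\<dots> = (\<Sum>h\<in>dih_carrier d. if fst h = s then X h else 0)"
  proof (rule sum.cong[OF refl])
    fix h assume "h \<in> dih_carrier d"
    then show "X h * T_tau d (dih_mult d (dinv d h) (s,k)) = (if fst h = s then X h else 0)"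
      using dm_in[OF d, of "dinv d h" "(s,k)"]
      by (cases h) (auto simp: T_tau_val dinv_def carrier_iff)
  qed
  also have "\<dots> = (\<Sum>j<d. X (s,j))"
    by (cases s) (simp_all add: sum_C)
  finally show ?thesis .
qed

lemma tauL: assumes d: "0 < d" and k: "k < d"
  shows "zg_mult d (T_tau d) X (s,k) = (\<Sum>j<d. X (s,j))"
proof -
  have "zg_mult d (T_tau d) X (s,k) = (\<Sum>h\<in>dih_carrier d. T_tau d (dih_mult d (s,k) (dinv d h)) * X h)"
    using k by (simp add: mult_L[OF d] carrier_iff)
  also have "\<dots> = (\<Sum>h\<in>dih_carrier d. if fst h = s then X h else 0)"
  proof (rule sum.cong[OF refl])
    fix h assume "h \<in> dih_carrier d"
    then show "T_tau d (dih_mult d (s,k) (dinv d h)) * X h = (if fst h = s then X h else 0)"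
      using dm_in[OF d, of "(s,k)" "dinv d h"]
      by (cases h) (auto simp: T_tau_val dinv_def carrier_iff)
  qed
  also have "\<dots> = (\<Sum>j<d. X (s,j))"
    by (cases s) (simp_all add: sum_C)
  finally show ?thesis .
qed

lemma T_tau_in: "T_tau d \<in> zg d"
  by (simp add: zg_def T_tau_val dih_carrier_def)
lemma T_sig_in: "0 < d \<Longrightarrow> T_sig \<in> zg d"
  by (simp add: zg_def T_sig_val dih_carrier_def)
lemma BB_in: "2 < d \<Longrightarrow> BB d \<in> zg d"
  by (simp add: zg_def BB_val dih_carrier_def)
lemma D1_in: "2 < d \<Longrightarrow> zg_sub zg_one (tau_pow d 1) \<in> zg d"
  by (subst D1_val) (auto simp: zg_def dih_carrier_def)
lemma h2e_in: "0 < d \<Longrightarrow> h2_elem d \<in> zg d"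
  by (simp add: zg_def h2e_val dih_carrier_def)
lemma sig_in: "0 < d \<Longrightarrow> sig \<in> zg d"
  by (simp add: sig_def zg_of_in carrier_iff)

lemma tau_central: assumes d: "0 < d" shows "zg_mult d (T_tau d) X = zg_mult d X (T_tau d)"
  by (rule ext_C[OF mult_zg[OF d] mult_zg[OF d]]) (simp add: tauL tauR d)




locale dd = fixes d :: nat assumes odd: "odd d" and d3: "2 < d"
begin

lemmas D1v = D1_val[simplified] D1_val
lemmas D1i = D1_in[simplified] D1_in
lemmas t1Rs = t1R[simplified] t1R

lemma d0: "0 < d" using d3 by simp
lemma d1: "1 < d" using d3 by simp
lemma hm: "int d = 2 * int ((d - 1) div 2) + 1"
proof -
  obtain m where "d = 2 * m + 1" using odd by (auto elim: oddE)
  then show ?thesis by simp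
qed

lemma I1: "zg_mult d T_sig (zg_sub zg_one (tau_pow d 1)) = zg_mult d T_sig (BB d)"
proof (rule ext_C[OF mult_zg[OF d0] mult_zg[OF d0]])
  fix s k assume k: "k < d"
  show "zg_mult d T_sig (zg_sub zg_one (tau_pow d 1)) (s,k) = zg_mult d T_sig (BB d) (s,k)"
    apply (subst sigL[OF d0 k D1_in[OF d3]])
    apply (subst sigL[OF d0 k BB_in[OF d3]])
    apply (simp add: D1v BB_val d3)
    done
qed

lemma I2: "zg_mult d (T_tau d) (T_tau d) = zg_smult (int d) (T_tau d)"
  by (rule ext_C[OF mult_zg[OF d0] zg_smult_in[OF T_tau_in]])
     (simp add: tauR d0 zg_smult_def T_tau_in, simp add: T_tau_val)

lemma I4: "zg_mult d (zg_sub zg_one (tau_pow d 1)) (T_tau d) = zg_zero"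
proof (rule ext_C[OF mult_zg[OF d0]])
  show "zg_zero \<in> zg d" by (simp add: zg_def zg_zero_def)
  fix s k assume k: "k < d"
  have "(\<Sum>j<d. zg_sub zg_one (tau_pow d 1) (s, j)) = (\<Sum>j<d. (if j = 0 \<and> \<not> s then 1 else 0) - (if j = 1 \<and> \<not> s then 1 else 0))"
    by (rule sum.cong) (auto simp: D1v d3)
  also have "\<dots> = 0" using d1 by (cases s) (simp_all add: sum_subtractf sum.delta)
  finally show "zg_mult d (zg_sub zg_one (tau_pow d 1)) (T_tau d) (s, k) = zg_zero (s, k)"
    by (simp add: tauR d0 k zg_zero_def)
qed

lemma I4': "zg_mult d (T_tau d) (zg_sub zg_one (tau_pow d 1)) = zg_zero"
  using I4 tau_central[OF d0] by simp

lemma I5: "zg_mult d T_sig (zg_add (T_tau d) (h2_elem d)) = zg_smult (int d) T_sig"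
proof (rule ext_C[OF mult_zg[OF d0] zg_smult_in[OF T_sig_in[OF d0]]])
  fix s k assume k: "k < d"
  have "zg_mult d T_sig (zg_add (T_tau d) (h2_elem d)) (s,k) = 1 + cc d k + cc d ((d - k) mod d)"
    apply (subst sigL[OF d0 k zg_add_in[OF T_tau_in h2e_in[OF d0]]])
    using k by (cases s) (simp_all add: zg_add_def T_tau_val h2e_val)
  also have "\<dots> = (if k = 0 then int d else 0)"
  proof (cases "k = 0")
    case True then show ?thesis using hm by (simp add: cc_def)
  next
    case False then show ?thesis using hm k by (simp add: cc_def of_nat_diff)
  qed
  finally show "zg_mult d T_sig (zg_add (T_tau d) (h2_elem d)) (s,k) = zg_smult (int d) T_sig (s,k)"
    by (simp add: zg_smult_def T_sig_val[OF d0])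
qed


lemma modkm: "k < d \<Longrightarrow> (k + (d - 1)) mod d = (if k = 0 then d - 1 else k - 1)"
proof (cases "k = 0")
  case False
  assume k: "k < d"
  have e: "k + (d - 1) = (k - 1) + d" using False d3 by simp
  have "(k - 1) mod d = k - 1" using k by simp
  then show ?thesis using False by (simp only: e mod_add_self2 if_False)
qed simp

lemma modkm2: "k < d \<Longrightarrow> (k + d - Suc 0) mod d = (if k = 0 then d - 1 else k - 1)"
  using modkm d3 by (metis Nat.add_diff_assoc One_nat_def Suc_leI d0)

lemma modkp: "k < d \<Longrightarrow> (1 + k) mod d = (if k = d - 1 then 0 else k + 1)"
  by (auto simp: mod_if)

lemma modkq: "k < d \<Longrightarrow> (d - k + 1) mod d = (if k = 0 then 1 else if k = 1 then 0 else d - k + 1)"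
  using d3 by (auto simp: mod_if)

lemma modkr: "k < d \<Longrightarrow> (d - k) mod d = (if k = 0 then 0 else d - k)"
  by (auto simp: mod_if)

lemma I6: "zg_add (zg_mult d (h2_elem d) (zg_sub zg_one (tau_pow d 1))) (zg_mult d (BB d) (T_tau d))
   = zg_smult (int d) (BB d)"
proof (rule ext_C[OF zg_add_in[OF mult_zg[OF d0] mult_zg[OF d0]] zg_smult_in[OF BB_in[OF d3]]])
  fix s k assume k: "k < d"
  have A: "zg_mult d (h2_elem d) (zg_sub zg_one (tau_pow d 1)) (s,k)
      = h2_elem d (s,k) - h2_elem d (s, (k + (d - 1)) mod d)"
    apply (subst sub_R)
    apply (subst one_R[OF d0 h2e_in[OF d0]])
    apply (simp only: zg_sub_def)
    apply (subst t1R[OF d1 k])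
    apply simp
    done
  have B: "zg_mult d (BB d) (T_tau d) (s,k) = (if s then -1 else 1)"
  proof -
    have "zg_mult d (BB d) (T_tau d) (s,k) = (\<Sum>j<d. BB d (s,j))" by (rule tauR[OF d0 k])
    also have "\<dots> = (\<Sum>j<d. (if j = 0 \<and> \<not> s then 1 else 0) - (if j = 1 \<and> s then 1 else 0))"
      by (rule sum.cong) (auto simp: BB_val d3)
    also have "\<dots> = (if s then -1 else 1)" using d1 by (cases s) (simp_all add: sum_subtractf sum.delta sum_negf)
    finally show ?thesis .
  qed
  show "zg_add (zg_mult d (h2_elem d) (zg_sub zg_one (tau_pow d 1))) (zg_mult d (BB d) (T_tau d)) (s,k)
      = zg_smult (int d) (BB d) (s,k)"
    unfolding zg_add_def A B
    using k hm d3 less_imp_diff_less[OF k, of "Suc 0"]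
    by (cases s; cases "k = 0"; cases "k = 1")
       (simp_all add: modkm modkm2 h2e_val d0 zg_smult_def BB_val cc_def of_nat_diff modkr)
qed


lemma E1_in: "zg_of (True, 1) \<in> zg d"
  using d1 by (simp add: zg_of_in carrier_iff)

lemma I7: "zg_mult d (zg_of (True,1)) (h2_elem d) = zg_smult (-1) (h2_elem d)"
proof (rule ext_C[OF mult_zg[OF d0] zg_smult_in[OF h2e_in[OF d0]]])
  fix s k assume k: "k < d"
  show "zg_mult d (zg_of (True,1)) (h2_elem d) (s,k) = zg_smult (-1) (h2_elem d) (s,k)"
  proof (cases s)
    case True
    have e: "(d - 1 + k) mod d = (if k = 0 then d - 1 else k - 1)"
      using modkm[OF k] by (simp add: add.commute)
    show ?thesis
      apply (subst E1L[OF d1 k])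
      apply (simp only: True if_True e)
      using k hm d3 less_imp_diff_less[OF k, of "Suc 0"]
      by (cases "k = 0") (simp_all add: h2e_val d0 zg_smult_def cc_def of_nat_diff modkr)
  next
    case False
    show ?thesis
      apply (subst E1L[OF d1 k])
      apply (simp only: False if_False modkp[OF k])
      using k hm d3 less_imp_diff_less[OF k, of "Suc 0"]
      by (cases "k = d - 1") (simp_all add: h2e_val d0 zg_smult_def cc_def of_nat_diff modkr)
  qed
qed

lemma I8: "zg_mult d T_sig sig = T_sig"
proof (rule ext_C[OF mult_zg[OF d0] T_sig_in[OF d0]])
  fix s k assume k: "k < d"
  show "zg_mult d T_sig sig (s,k) = T_sig (s,k)"
    apply (subst sigR[OF d0 k])
    using k by (simp add: T_sig_val[OF d0] modkr)
qed

lemma I9: "zg_mult d (BB d) (zg_of (True,1)) = zg_smult (-1) (BB d)"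
proof (rule ext_C[OF mult_zg[OF d0] zg_smult_in[OF BB_in[OF d3]]])
  fix s k assume k: "k < d"
  show "zg_mult d (BB d) (zg_of (True,1)) (s,k) = zg_smult (-1) (BB d) (s,k)"
    apply (subst E1R[OF d1 k])
    using k d3 mod_Suc[of d d] by (cases s; cases "k = 0"; cases "k = 1") (simp_all add: BB_val modkq zg_smult_def)
qed

definition uu :: zg where "uu = zg_sum (\<lambda>i. zg_smult (cc d i) (tau_pow d i)) {..<d}"

lemma uu_in: "uu \<in> zg d"
  unfolding uu_def
  by (intro zg_sum_in zg_smult_in) (simp add: tau_pow_def zg_of_in carrier_iff d0)

lemma I10: "h2_elem d = zg_mult d uu T_sig"
  unfolding uu_def h2_elem_def
  by (simp add: sum_L[OF d0] smult_L cc_def)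

lemma I11: "zg_mult d T_sig (T_tau d) = (\<lambda>(s,k). if k < d then 1 else 0)"
proof (rule ext_C[OF mult_zg[OF d0]])
  show "(\<lambda>(s,k). if k < d then 1 else 0) \<in> zg d" by (simp add: zg_def dih_carrier_def)
  fix s k assume k: "k < d"
  show "zg_mult d T_sig (T_tau d) (s,k) = (\<lambda>(s,k). if k < d then 1 else 0) (s,k)"
    apply (subst sigL[OF d0 k T_tau_in])
    using k by (cases s) (simp_all add: T_tau_val)
qed

end



lemma hom_right:
  assumes d: "0 < d" and M: "\<And>x. x \<in> M \<Longrightarrow> zg_mult d x c \<in> N"
  shows "zg_hom d M N (\<lambda>x. zg_mult d x c)"
  unfolding zg_hom_def using M by (simp add: add_L mult_assoc[OF d])

lemma hom_id:
  assumes "M \<subseteq> N"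
  shows "zg_hom d M N (\<lambda>x. x)"
  unfolding zg_hom_def using assms by auto

lemma li_iff: "y \<in> left_ideal d a \<longleftrightarrow> (\<exists>x\<in>zg d. y = zg_mult d x a)"
  unfolding left_ideal_def by auto

context dd begin

lemmas A = mult_assoc[OF d0]
abbreviation "D1 \<equiv> zg_sub zg_one (tau_pow d 1)"

lemma li_zg: "left_ideal d a \<subseteq> zg d"
  unfolding left_ideal_def using mult_zg[OF d0] by auto

lemma welldef:
  assumes x: "x \<in> zg d" and x': "x' \<in> zg d" and eq: "zg_mult d x (BB d) = zg_mult d x' (BB d)"
  shows "zg_mult d x (h2_elem d) = zg_mult d x' (h2_elem d)"
proof -
  define z where "z = zg_sub x x'"
  have z: "z \<in> zg d" unfolding z_def by (rule zg_sub_in[OF x x'])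
  have "zg_mult d z (BB d) = zg_sub (zg_mult d x (BB d)) (zg_mult d x' (BB d))"
    unfolding z_def by (rule sub_L)
  also have "\<dots> = (\<lambda>_. 0)" using eq by (simp add: zg_sub_def)
  finally have zB: "zg_mult d z (BB d) = (\<lambda>_. 0)" .
  have "zg_mult d z (BB d) = zg_sub z (zg_mult d z (zg_of (True,1)))"
    unfolding BB_def sig_t1[OF d3] sub_R one_R[OF d0 z] ..
  with zB have zE: "zg_mult d z (zg_of (True,1)) = z"
    by (auto simp: zg_sub_def fun_eq_iff)
  have "zg_mult d z (h2_elem d) = zg_mult d (zg_mult d z (zg_of (True,1))) (h2_elem d)"
    using zE by simp
  also have "\<dots> = zg_smult (-1) (zg_mult d z (h2_elem d))"
    by (simp only: A I7 smult_R)
  finally have "zg_mult d z (h2_elem d) = (\<lambda>_. 0)"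
    by (auto simp: zg_smult_def fun_eq_iff)
  moreover have "zg_mult d z (h2_elem d) = zg_sub (zg_mult d x (h2_elem d)) (zg_mult d x' (h2_elem d))"
    unfolding z_def by (rule sub_L)
  ultimately show ?thesis by (auto simp: zg_sub_def fun_eq_iff)
qed

lemma h2_eq:
  assumes x: "x \<in> zg d"
  shows "h2 d (zg_mult d x (BB d)) = zg_mult d x (h2_elem d)"
proof -
  let ?P = "\<lambda>x'. x' \<in> zg d \<and> zg_mult d x' (BB d) = zg_mult d x (BB d)"
  have "?P (SOME x'. ?P x')" by (rule someI[of ?P x]) (simp add: x)
  then show ?thesis unfolding h2_def using welldef x by blast
qed


lemma exact2:
  assumes y: "y \<in> M2 d" and y0: "zg_mult d y D1 = zg_zero"
  shows "y \<in> M1 d"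
proof -
  obtain x where x: "x \<in> zg d" and yx: "y = zg_mult d x T_sig"
    using y unfolding M2_def li_iff by blast
  have yz: "y \<in> zg d" using yx mult_zg[OF d0] by simp
  have ys: "zg_mult d y sig = y" unfolding yx A I8 ..
  have "zg_mult d y D1 = zg_sub y (zg_mult d y (tau_pow d 1))"
    unfolding sub_R one_R[OF d0 yz] ..
  with y0 have yt: "zg_mult d y (tau_pow d 1) = y"
    by (auto simp: zg_sub_def zg_zero_def fun_eq_iff)
  have st: "y (s, (k + (d - 1)) mod d) = y (s,k)" if k: "k < d" for s k
    using t1R[OF d1 k, of y s] yt by simp
  have ss: "y (\<not> s, (d - k) mod d) = y (s,k)" if k: "k < d" for s k
    using sigR[OF d0 k, of y s] ys by simp
  have cF: "k < d \<Longrightarrow> y (False, k) = y (False, 0)" for k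
  proof (induction k)
    case (Suc k)
    have "y (False, Suc k) = y (False, (Suc k + (d - 1)) mod d)" using st[OF Suc.prems] by simp
    also have "\<dots> = y (False, k)" using modkm[OF Suc.prems] by simp
    finally show ?case using Suc by simp
  qed simp
  have cT: "k < d \<Longrightarrow> y (True, k) = y (False, 0)" for k
    using ss[of k True] cF[of "(d - k) mod d"] d0 by simp
  let ?c = "y (False, 0)"
  have "y = zg_smult ?c (zg_mult d T_sig (T_tau d))"
  proof (rule ext_C[OF yz zg_smult_in[OF mult_zg[OF d0]]])
    fix s k assume k: "k < d"
    show "y (s,k) = zg_smult ?c (zg_mult d T_sig (T_tau d)) (s,k)"
      using k cF[OF k] cT[OF k] by (cases s) (simp_all add: I11 zg_smult_def)
  qed
  also have "\<dots> = zg_mult d (zg_smult ?c zg_one) (zg_mult d T_sig (T_tau d))"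
    by (simp add: smult_L one_L[OF d0 mult_zg[OF d0]])
  finally show ?thesis unfolding M1_def li_iff
    by (intro bexI[of _ "zg_smult ?c zg_one"] zg_smult_in) (auto simp: zg_one_def zg_of_in carrier_iff d0)
qed

end



context dd begin

lemma exact3:
  assumes y: "y \<in> M3 d" and y0: "zg_mult d y (T_tau d) = zg_zero"
  shows "y \<in> d2 d ` M2 d"
proof -
  obtain x where x: "x \<in> zg d" and yx: "y = zg_mult d x (BB d)"
    using y unfolding M3_def li_iff by blast
  have yz: "y \<in> zg d" using yx mult_zg[OF d0] by simp
  have yE: "zg_mult d y (zg_of (True,1)) = zg_smult (-1) y"
    unfolding yx A I9 smult_R ..
  have rel: "y (\<not> s, (d - k + 1) mod d) = - y (s,k)" if k: "k < d" for s k
    using E1R[OF d1 k, of y s] yE by (simp add: zg_smult_def)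
  have sum0: "(\<Sum>j<d. y (False, j)) = 0"
    using tauR[OF d0 d0, of y False] y0 by (simp add: zg_zero_def)
  define v where "v k = (\<Sum>i<k. y (False, Suc i))" for k
  have v0: "v 0 = 0" by (simp add: v_def)
  have vS: "v (Suc k) = v k + y (False, Suc k)" for k by (simp add: v_def)
  have vd: "v (d - 1) = - y (False, 0)"
  proof -
    have "(\<Sum>j<Suc (d - 1). y (False, j)) = y (False, 0) + v (d - 1)"
      unfolding v_def by (rule sum.lessThan_Suc_shift)
    then show ?thesis using sum0 d0 by simp
  qed
  define w where "w = (\<lambda>(s,k). if \<not> s \<and> k < d then v k else 0)"
  have wz: "w \<in> zg d" by (simp add: zg_def w_def dih_carrier_def)
  define z where "z = zg_mult d w T_sig"
  have zM: "z \<in> M2 d" unfolding M2_def li_iff z_def using wz by blast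
  have zz: "z \<in> zg d" unfolding z_def by (rule mult_zg[OF d0])
  have zv: "z (s,k) = (if s then v ((d - k) mod d) else v k)" if k: "k < d" for s k
  proof -
    have "z = zg_add w (zg_mult d w sig)"
      unfolding z_def T_sig_def add_R one_R[OF d0 wz] ..
    then have "z (s,k) = w (s,k) + w (\<not> s, (d - k) mod d)"
      by (simp add: zg_add_def sigR[OF d0 k])
    then show ?thesis using k d0 by (cases s) (simp_all add: w_def)
  qed
  have "zg_mult d z D1 = zg_sub z (zg_mult d z (tau_pow d 1))"
    unfolding sub_R one_R[OF d0 zz] ..
  have "y = zg_mult d z D1"
  proof (rule ext_C[OF yz mult_zg[OF d0]])
    fix s k assume k: "k < d"
    have e: "zg_mult d z D1 (s,k) = z (s,k) - z (s, (k + (d - 1)) mod d)"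
      apply (subst sub_R) apply (subst one_R[OF d0 zz])
      apply (simp only: zg_sub_def)
      apply (subst t1R[OF d1 k])
      apply simp
      done
    have km: "(k + (d - 1)) mod d < d" using d0 by simp
    show "y (s,k) = zg_mult d z D1 (s,k)"
    proof (cases s)
      case False
      show ?thesis
      proof (cases k)
        case 0
        then show ?thesis using e zv[OF k] zv[OF km] False d3 vd v0 modkm[OF k] by simp
      next
        case (Suc k')
        then show ?thesis using e zv[OF k] zv[OF km] False d3 vS[of k'] modkm[OF k] by simp
      qed
    next
      case True
      show ?thesis
      proof (cases "k = 0")
        case k0: True
        have r: "y (False, 1) = - y (True, 0)" using rel[of 0 True] d3 k0 mod_Suc[of d d] by simp
        have "(d - (d - 1)) mod d = 1" using d3 by simp
        then show ?thesis using e zv[OF k] zv[OF km] True k0 d3 v0 vS[of 0] modkm[OF k] r by simp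
      next
        case kn0: False
        show ?thesis
        proof (cases "k = 1")
          case k1: True
          have r: "y (False, 0) = - y (True, 1)" using rel[of 1 True] d3 k1 by simp
          then show ?thesis using e zv[OF k] zv[OF km] True k1 d3 v0 vd modkm[OF k] by simp
        next
          case k1: False
          have r: "y (False, d - k + 1) = - y (True, k)" using rel[OF k, of True] k kn0 k1 by simp
          have q: "d - (k - 1) = Suc (d - k)" using k kn0 by simp
          show ?thesis using e zv[OF k] zv[OF km] True k kn0 k1 modkm[OF k] vS[of "d - k"] r q
            by (simp add: modkr)
        qed
      qed
    qed
  qed
  then have "y = d2 d z" by (simp add: d2_def)
  then show ?thesis using zM by blast
qed

end



context dd begin

lemma M1sub: "M1 d \<subseteq> M2 d"
proof
  fix y assume "y \<in> M1 d"
  then obtain x where x: "x \<in> zg d" and y: "y = zg_mult d x (zg_mult d T_sig (T_tau d))"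
    unfolding M1_def li_iff by blast
  have "y = zg_mult d (zg_mult d x (T_tau d)) T_sig"
    unfolding y A tau_central[OF d0] ..
  then show "y \<in> M2 d" unfolding M2_def li_iff using mult_zg[OF d0] by blast
qed

lemma M4sub: "M4 d \<subseteq> M3 d"
proof
  fix y assume "y \<in> M4 d"
  then obtain x where x: "x \<in> zg d" and y: "y = zg_mult d x (zg_mult d (BB d) (T_tau d))"
    unfolding M4_def li_iff by blast
  have "y = zg_mult d (zg_mult d x (T_tau d)) (BB d)"
    unfolding y A tau_central[OF d0] ..
  then show "y \<in> M3 d" unfolding M3_def li_iff using mult_zg[OF d0] by blast
qed

lemma d2BB: assumes "x \<in> M2 d" shows "zg_mult d x D1 = zg_mult d x (BB d)"
proof -
  obtain w where w: "w \<in> zg d" and x: "x = zg_mult d w T_sig"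
    using assms unfolding M2_def li_iff by blast
  show ?thesis unfolding x A I1 ..
qed

lemma d2_into: assumes "x \<in> M2 d" shows "zg_mult d x D1 \<in> M3 d"
  unfolding d2BB[OF assms] M3_def li_iff using assms li_zg unfolding M2_def by blast

lemma d3_into: assumes "x \<in> M3 d" shows "zg_mult d x (T_tau d) \<in> M4 d"
proof -
  obtain w where w: "w \<in> zg d" and x: "x = zg_mult d w (BB d)"
    using assms unfolding M3_def li_iff by blast
  show ?thesis unfolding x A M4_def li_iff using w by blast
qed

lemma h1_into: assumes "x \<in> M2 d" shows "zg_mult d x (T_tau d) \<in> M1 d"
proof -
  obtain w where w: "w \<in> zg d" and x: "x = zg_mult d w T_sig"
    using assms unfolding M2_def li_iff by blast
  show ?thesis unfolding x A M1_def li_iff using w by blast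
qed

lemma h2_into: assumes "x \<in> M3 d" shows "h2 d x \<in> M2 d"
proof -
  obtain w where w: "w \<in> zg d" and x: "x = zg_mult d w (BB d)"
    using assms unfolding M3_def li_iff by blast
  have "h2 d x = zg_mult d (zg_mult d w uu) T_sig"
    unfolding x h2_eq[OF w] I10 A ..
  then show ?thesis unfolding M2_def li_iff using mult_zg[OF d0] by blast
qed

lemma h2_hom: "zg_hom d (M3 d) (M2 d) (h2 d)"
  unfolding zg_hom_def
proof (intro conjI ballI)
  fix x assume "x \<in> M3 d" then show "h2 d x \<in> M2 d" by (rule h2_into)
next
  fix x y assume "x \<in> M3 d" "y \<in> M3 d"
  then obtain w w' where w: "w \<in> zg d" "x = zg_mult d w (BB d)" and w': "w' \<in> zg d" "y = zg_mult d w' (BB d)"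
    unfolding M3_def li_iff by blast
  have "zg_add x y = zg_mult d (zg_add w w') (BB d)" unfolding w w' add_L ..
  then show "h2 d (zg_add x y) = zg_add (h2 d x) (h2 d y)"
    using h2_eq[OF zg_add_in[OF w(1) w'(1)]] h2_eq[OF w(1)] h2_eq[OF w'(1)] w w' by (simp add: add_L)
next
  fix r x assume r: "r \<in> zg d" and "x \<in> M3 d"
  then obtain w where w: "w \<in> zg d" "x = zg_mult d w (BB d)"
    unfolding M3_def li_iff by blast
  have "zg_mult d r x = zg_mult d (zg_mult d r w) (BB d)" unfolding w A ..
  then show "h2 d (zg_mult d r x) = zg_mult d r (h2 d x)"
    using h2_eq[OF mult_zg[OF d0], of r w] h2_eq[OF w(1)] w by (simp add: A)
qed

end

theorem theorem5p4:
  fixes d :: nat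
  assumes "odd d" and "d \<ge> 3"
  shows
    \<comment> \<open>exactness of 0 -> M1 -> M2 -> M3 -> M4 -> 0\<close>
    "inj_on (d1 d) (M1 d)
     \<and> {y \<in> M2 d. d2 d y = zg_zero} = d1 d ` M1 d
     \<and> {y \<in> M3 d. d3 d y = zg_zero} = d2 d ` M2 d
     \<and> d3 d ` M3 d = M4 d
     \<comment> \<open>well-definedness of h2\<close>
     \<and> (\<forall>x\<in>zg d. \<forall>x'\<in>zg d. zg_mult d x (BB d) = zg_mult d x' (BB d)
            \<longrightarrow> zg_mult d x (h2_elem d) = zg_mult d x' (h2_elem d))
     \<comment> \<open>module homomorphisms\<close>
     \<and> zg_hom d (M1 d) (M2 d) (d1 d)
     \<and> zg_hom d (M2 d) (M3 d) (d2 d)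
     \<and> zg_hom d (M3 d) (M4 d) (d3 d)
     \<and> zg_hom d (M2 d) (M1 d) (h1 d)
     \<and> zg_hom d (M3 d) (M2 d) (h2 d)
     \<and> zg_hom d (M4 d) (M3 d) (h3 d)
     \<comment> \<open>prism conditions\<close>
     \<and> (\<forall>x\<in>M1 d. h1 d (d1 d x) = zg_smult (int d) x)
     \<and> (\<forall>x\<in>M2 d. zg_add (d1 d (h1 d x)) (h2 d (d2 d x)) = zg_smult (int d) x)
     \<and> (\<forall>x\<in>M3 d. zg_add (d2 d (h2 d x)) (h3 d (d3 d x)) = zg_smult (int d) x)
     \<and> (\<forall>x\<in>M4 d. d3 d (h3 d x) = zg_smult (int d) x)"
proof -
  interpret dd d using assms by unfold_locales auto
  have d1eq: "d1 d = (\<lambda>x. x)" by (simp add: fun_eq_iff d1_def)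
  have h3eq: "h3 d = (\<lambda>x. x)" by (simp add: fun_eq_iff h3_def)
  have d2eq: "d2 d = (\<lambda>x. zg_mult d x D1)" by (simp add: fun_eq_iff d2_def)
  have d3eq: "d3 d = (\<lambda>x. zg_mult d x (T_tau d))" by (simp add: fun_eq_iff d3_def)
  have h1eq: "h1 d = (\<lambda>x. zg_mult d x (T_tau d))" by (simp add: fun_eq_iff h1_def)
  have E1: "inj_on (d1 d) (M1 d)" unfolding d1eq by simp
  have E2: "{y \<in> M2 d. d2 d y = zg_zero} = d1 d ` M1 d"
  proof
    show "{y \<in> M2 d. d2 d y = zg_zero} \<subseteq> d1 d ` M1 d"
      unfolding d1eq d2eq using exact2 by auto
  next
    show "d1 d ` M1 d \<subseteq> {y \<in> M2 d. d2 d y = zg_zero}"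
    proof
      fix y assume "y \<in> d1 d ` M1 d"
      then have y: "y \<in> M1 d" unfolding d1eq by simp
      then obtain x where x: "x \<in> zg d" and yx: "y = zg_mult d x (zg_mult d T_sig (T_tau d))"
        unfolding M1_def li_iff by blast
      have "zg_mult d y D1 = zg_zero" unfolding yx A I4' zero_R ..
      then show "y \<in> {y \<in> M2 d. d2 d y = zg_zero}" using y M1sub unfolding d2eq by auto
    qed
  qed
  have E3: "{y \<in> M3 d. d3 d y = zg_zero} = d2 d ` M2 d"
  proof
    show "{y \<in> M3 d. d3 d y = zg_zero} \<subseteq> d2 d ` M2 d"
      unfolding d3eq using exact3 by auto
  next
    show "d2 d ` M2 d \<subseteq> {y \<in> M3 d. d3 d y = zg_zero}"
    proof
      fix y assume "y \<in> d2 d ` M2 d"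
      then obtain z where z: "z \<in> M2 d" and yz: "y = zg_mult d z D1" unfolding d2eq by auto
      have "zg_mult d y (T_tau d) = zg_zero" unfolding yz A I4 zero_R ..
      then show "y \<in> {y \<in> M3 d. d3 d y = zg_zero}" using d2_into[OF z] yz unfolding d3eq by auto
    qed
  qed
  have E4: "d3 d ` M3 d = M4 d"
  proof
    show "d3 d ` M3 d \<subseteq> M4 d" unfolding d3eq using d3_into by auto
  next
    show "M4 d \<subseteq> d3 d ` M3 d"
    proof
      fix y assume "y \<in> M4 d"
      then obtain x where x: "x \<in> zg d" and yx: "y = zg_mult d x (zg_mult d (BB d) (T_tau d))"
        unfolding M4_def li_iff by blast
      have "y = d3 d (zg_mult d x (BB d))" unfolding yx d3eq A ..
      moreover have "zg_mult d x (BB d) \<in> M3 d" unfolding M3_def li_iff using x by blast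
      ultimately show "y \<in> d3 d ` M3 d" by blast
    qed
  qed
  have WD: "\<forall>x\<in>zg d. \<forall>x'\<in>zg d. zg_mult d x (BB d) = zg_mult d x' (BB d)
            \<longrightarrow> zg_mult d x (h2_elem d) = zg_mult d x' (h2_elem d)"
    using welldef by blast
  have H1: "zg_hom d (M1 d) (M2 d) (d1 d)" unfolding d1eq by (rule hom_id[OF M1sub])
  have H2: "zg_hom d (M2 d) (M3 d) (d2 d)" unfolding d2eq by (rule hom_right[OF d0 d2_into])
  have H3: "zg_hom d (M3 d) (M4 d) (d3 d)" unfolding d3eq by (rule hom_right[OF d0 d3_into])
  have H4: "zg_hom d (M2 d) (M1 d) (h1 d)" unfolding h1eq by (rule hom_right[OF d0 h1_into])
  have H6: "zg_hom d (M4 d) (M3 d) (h3 d)" unfolding h3eq by (rule hom_id[OF M4sub])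
  have P1: "\<forall>x\<in>M1 d. h1 d (d1 d x) = zg_smult (int d) x"
  proof
    fix y assume "y \<in> M1 d"
    then obtain x where x: "x \<in> zg d" and yx: "y = zg_mult d x (zg_mult d T_sig (T_tau d))"
      unfolding M1_def li_iff by blast
    show "h1 d (d1 d y) = zg_smult (int d) y"
      unfolding h1eq d1eq yx A I2 smult_R ..
  qed
  have P2: "\<forall>x\<in>M2 d. zg_add (d1 d (h1 d x)) (h2 d (d2 d x)) = zg_smult (int d) x"
  proof
    fix y assume y: "y \<in> M2 d"
    then obtain x where x: "x \<in> zg d" and yx: "y = zg_mult d x T_sig"
      unfolding M2_def li_iff by blast
    have yz: "y \<in> zg d" using yx mult_zg[OF d0] by simp
    have "h2 d (d2 d y) = zg_mult d y (h2_elem d)"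
      unfolding d2eq using d2BB[OF y] h2_eq[OF yz] by simp
    then have "zg_add (d1 d (h1 d y)) (h2 d (d2 d y)) = zg_mult d y (zg_add (T_tau d) (h2_elem d))"
      unfolding d1eq h1eq add_R by simp
    also have "\<dots> = zg_smult (int d) y" unfolding yx A I5 smult_R ..
    finally show "zg_add (d1 d (h1 d y)) (h2 d (d2 d y)) = zg_smult (int d) y" .
  qed
  have P3: "\<forall>x\<in>M3 d. zg_add (d2 d (h2 d x)) (h3 d (d3 d x)) = zg_smult (int d) x"
  proof
    fix y assume y: "y \<in> M3 d"
    then obtain x where x: "x \<in> zg d" and yx: "y = zg_mult d x (BB d)"
      unfolding M3_def li_iff by blast
    have "zg_add (d2 d (h2 d y)) (h3 d (d3 d y))
        = zg_add (zg_mult d (zg_mult d x (h2_elem d)) D1) (zg_mult d (zg_mult d x (BB d)) (T_tau d))"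
      unfolding d2eq h3eq d3eq yx h2_eq[OF x] ..
    also have "\<dots> = zg_mult d x (zg_add (zg_mult d (h2_elem d) D1) (zg_mult d (BB d) (T_tau d)))"
      unfolding A add_R ..
    also have "\<dots> = zg_smult (int d) y" unfolding I6 smult_R yx ..
    finally show "zg_add (d2 d (h2 d y)) (h3 d (d3 d y)) = zg_smult (int d) y" .
  qed
  have P4: "\<forall>x\<in>M4 d. d3 d (h3 d x) = zg_smult (int d) x"
  proof
    fix y assume "y \<in> M4 d"
    then obtain x where x: "x \<in> zg d" and yx: "y = zg_mult d x (zg_mult d (BB d) (T_tau d))"
      unfolding M4_def li_iff by blast
    show "d3 d (h3 d y) = zg_smult (int d) y"
      unfolding d3eq h3eq yx A I2 smult_R ..
  qed
  show ?thesis using E1 E2 E3 E4 WD H1 H2 H3 H4 h2_hom H6 P1 P2 P3 P4 by blast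
qed



end
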